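(* Let $m=m_n\ge1$ and $F=F_n$ be such that $(F)_2\lesssim(F)_0$ and $\mu=\log n-\frac mn(F)_1\to-\infty$ as $n\to\infty$. Then $H^*_{nmF}$ is connected with probability tending to one.
   Context: Shotgun random hypergraph: given integers $n,m\ge1$ and probability distributions $f^{(1)},\dots,f^{(m)}$ on $\{0,\dots,n\}$, write $F=f^{(1)}\times\cdots\times f^{(m)}$. $H^*_{nmF}$ is the random hypergraph with node set $\{1,\dots,n\}$ and hyperedge set $\{V_1,\dots,V_m\}$, where $V_1,\dots,V_m\subset\{1,\dots,n\}$ are mutually independent and $\mathbb{P}(V_k=A)=f^{(k)}(|A|)\binom{n}{|A|}^{-1}$. A hypergraph on node set $V$ is connected if for every partition of $V$ into nonempty sets $V_1',V_2'$ some hyperedge meets both. Moments: $(F)_r=\frac1m\sum_{k=1}^m\sum_{x=2}^n x^r f^{(k)}(x)$. $a_n\lesssim b_n$ means $\limsup a_n/|b_n|<\infty$. *)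

theory Defs
  imports "HOL-Analysis.Analysis"
begin

definition is_dist_family :: "nat \<Rightarrow> nat \<Rightarrow> (nat \<Rightarrow> nat \<Rightarrow> real) \<Rightarrow> bool" where
  "is_dist_family n m g \<longleftrightarrow>
     (\<forall>k\<in>{1..m}. (\<forall>x. 0 \<le> g k x) \<and> (\<Sum>x\<in>{0..n}. g k x) = 1)"

definition hg_connected :: "nat \<Rightarrow> nat \<Rightarrow> (nat \<Rightarrow> nat set) \<Rightarrow> bool" where
  "hg_connected n m V \<longleftrightarrow>
     (\<forall>A B. A \<noteq> {} \<and> B \<noteq> {} \<and> A \<inter> B = {} \<and> A \<union> B = {1..n} \<longrightarrow>
        (\<exists>k\<in>{1..m}. V k \<inter> A \<noteq> {} \<and> V k \<inter> B \<noteq> {}))"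

text \<open>P(V_k = A) = g k |A| / binom(n,|A|), V_1..V_m independent.\<close>
definition edge_prob :: "nat \<Rightarrow> (nat \<Rightarrow> nat \<Rightarrow> real) \<Rightarrow> nat \<Rightarrow> nat set \<Rightarrow> real" where
  "edge_prob n g k A = g k (card A) / real (n choose card A)"

definition prob_connected :: "nat \<Rightarrow> nat \<Rightarrow> (nat \<Rightarrow> nat \<Rightarrow> real) \<Rightarrow> real" where
  "prob_connected n m g =
     (\<Sum>V\<in>PiE {1..m} (\<lambda>_. Pow {1..n}).
        (if hg_connected n m V then (\<Prod>k\<in>{1..m}. edge_prob n g k (V k)) else 0))"

definition moment :: "nat \<Rightarrow> nat \<Rightarrow> nat \<Rightarrow> (nat \<Rightarrow> nat \<Rightarrow> real) \<Rightarrow> real" where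
  "moment r n m g = (1 / real m) * (\<Sum>k\<in>{1..m}. \<Sum>x\<in>{2..n}. real x ^ r * g k x)"

definition lesssim :: "(nat \<Rightarrow> real) \<Rightarrow> (nat \<Rightarrow> real) \<Rightarrow> bool" where
  "lesssim a b \<longleftrightarrow> limsup (\<lambda>n. ereal (a n / \<bar>b n\<bar>)) < \<infinity>"

end

theory Submission
  imports Defs
begin


lemma choose_Suc_real:
  "real (a choose Suc x) * (real x + 1) = real (a choose x) * (real a - real x)"
proof (cases "x < a")
  case True
  have "(a choose Suc x) * Suc x = (a choose x) * (a - x)"
  proof -
    have "Suc x * (a choose Suc x) = a * ((a - 1) choose x)"
      using times_binomial_minus1_eq[of "Suc x" a] by simp
    moreover have "(a - x) * (a choose x) = a * ((a - 1) choose x)"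
      by (rule binomial_absorb_comp)
    ultimately show ?thesis by (simp add: mult.commute)
  qed
  then have h: "real (a choose Suc x) * real (Suc x) = real (a choose x) * real (a - x)"
    by (metis of_nat_mult)
  have e1: "real (Suc x) = real x + 1" by simp
  have e2: "real (a - x) = real a - real x" using True by simp
  show ?thesis using h unfolding e1 e2 .
next
  case False
  then show ?thesis by (cases "x = a") (auto simp: binomial_eq_0)
qed

lemma choose_ratio_le:
  assumes "a \<le> n" "n > 0"
  shows "real (a choose x) \<le> (real a / real n) ^ x * real (n choose x)"
proof (induction x)
  case 0
  then show ?case by simp
next
  case (Suc x)
  have pos: "real x + 1 > 0" by simp
  have lhs: "real (a choose Suc x) * (real x + 1) = real (a choose x) * (real a - real x)"
    by (rule choose_Suc_real)
  have rhs: "real (n choose Suc x) * (real x + 1) = real (n choose x) * (real n - real x)"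
    by (rule choose_Suc_real)
  have "real (a choose x) * (real a - real x) \<le> (real a / real n) ^ Suc x * (real (n choose x) * (real n - real x))"
  proof (cases "x < a")
    case True
    have h1: "real a - real x \<le> (real a / real n) * (real n - real x)"
    proof -
      have "real a * real x \<le> real n * real x" using assms by (intro mult_right_mono) auto
      then show ?thesis using assms by (simp add: field_simps)
    qed
    have "real (a choose x) * (real a - real x) \<le> ((real a / real n) ^ x * real (n choose x)) * (real a - real x)"
      using Suc.IH True by (intro mult_right_mono) auto
    also have "\<dots> \<le> ((real a / real n) ^ x * real (n choose x)) * ((real a / real n) * (real n - real x))"
      by (intro mult_left_mono h1) auto
    finally show ?thesis by (simp only: power_Suc mult_ac)
  next
    case False
    then have "real (a choose x) * (real a - real x) \<le> 0"
      by (intro mult_nonneg_nonpos) auto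
    moreover have "0 \<le> (real a / real n) ^ Suc x * (real (n choose x) * (real n - real x))"
    proof (cases "x \<le> n")
      case True then show ?thesis by auto
    next
      case False then show ?thesis by (simp add: binomial_eq_0)
    qed
    ultimately show ?thesis by linarith
  qed
  then have "real (a choose Suc x) * (real x + 1) \<le> (real a / real n) ^ Suc x * (real (n choose Suc x) * (real x + 1))"
    unfolding lhs rhs .
  then have "real (a choose Suc x) * (real x + 1) \<le> ((real a / real n) ^ Suc x * real (n choose Suc x)) * (real x + 1)"
    by (simp only: mult.assoc)
  then show ?case using pos by (meson mult_le_cancel_right_pos)
qed

lemma pow_one_minus_le:
  assumes "0 \<le> t" "t \<le> 1"
  shows "(1 - t) ^ x \<le> 1 - real x * t + (real x)^2 * t^2 / 2"
proof (induction x)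
  case 0 then show ?case by simp
next
  case (Suc x)
  have "(1 - t) ^ Suc x = (1 - t) * (1 - t) ^ x" by simp
  also have "\<dots> \<le> (1 - t) * (1 - real x * t + (real x)^2 * t^2 / 2)"
    using Suc.IH assms by (intro mult_left_mono) auto
  also have "\<dots> \<le> 1 - real (Suc x) * t + (real (Suc x))^2 * t^2 / 2"
  proof -
    have "0 \<le> (real x)^2 * t^3 / 2" using assms by simp
    then show ?thesis by (simp add: algebra_simps power2_eq_square power3_eq_cube)
  qed
  finally show ?case .
qed

lemma poly_b:
  assumes "0 \<le> t" "t \<le> 1" "x \<ge> 2"
  shows "real x * t - (real x)^2 * t^2 \<le> 1 - t ^ x - (1 - t) ^ x"
proof -
  have a: "t ^ x \<le> t ^ 2" using assms by (intro power_decreasing) auto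
  have b: "t^2 \<le> (real x)^2 * t^2 / 4"
  proof -
    have "(2::real) \<le> real x" using assms by simp
    then have "(2::real)^2 \<le> (real x)^2" by (intro power_mono) auto
    then have "4 \<le> (real x)^2" by simp
    then have "4 * t^2 \<le> (real x)^2 * t^2" by (rule mult_right_mono) auto
    then show ?thesis by simp
  qed
  have c: "0 \<le> (real x)^2 * t^2" by simp
  show ?thesis using pow_one_minus_le[OF assms(1,2), of x] a b c by linarith
qed

lemma poly_a:
  fixes t :: real
  assumes "0 \<le> t" "t \<le> 1/2" "x \<ge> 2"
  shows "t \<le> 1 - t ^ x - (1 - t) ^ x"
proof -
  have a: "t ^ x \<le> t ^ 2" using assms by (intro power_decreasing) auto
  have b: "(1-t) ^ x \<le> (1-t) ^ 2" using assms by (intro power_decreasing) auto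
  have c: "t * t \<le> t / 2" using assms mult_left_mono[of t "1/2" t] by simp
  show ?thesis using a b c assms by (simp add: power2_eq_square algebra_simps)
qed

lemma choose_le_fact:
  assumes "u \<le> n"
  shows "real (n choose u) * fact u \<le> real n ^ u"
proof -
  have "(n choose u) * fact u = fact n div fact (n - u)"
    using binomial_fact_lemma[OF assms]
    by (metis fact_nonzero nonzero_mult_div_cancel_right mult.assoc mult.commute)
  also have "\<dots> \<le> n ^ u" using fact_div_fact_le_pow[OF assms] .
  finally have "(n choose u) * fact u \<le> n ^ u" .
  then have "real ((n choose u) * fact u) \<le> real (n ^ u)" by (simp only: of_nat_le_iff)
  then show ?thesis by simp
qed

lemma pow_fact_le_exp:
  "real u ^ u \<le> exp 1 ^ u * fact u"
proof (induction u)
  case 0 then show ?case by simp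
next
  case (Suc u)
  show ?case
  proof (cases "u = 0")
    case True then show ?thesis using exp_ge_add_one_self[of 1] by simp
  next
    case False
    have key: "(real u + 1) ^ u \<le> exp 1 * real u ^ u"
    proof -
      have "(1 + 1 / real u) ^ u \<le> exp (1 / real u) ^ u"
        using exp_ge_add_one_self[of "1/real u"] by (intro power_mono) (auto simp: add.commute)
      also have "\<dots> = exp 1" using False by (simp flip: exp_of_nat_mult)
      finally have "(1 + 1 / real u) ^ u \<le> exp 1" .
      moreover have "(1 + 1 / real u) ^ u * real u ^ u = (real u + 1) ^ u"
        using False by (simp add: power_mult_distrib[symmetric] field_simps)
      ultimately show ?thesis
        by (metis mult_right_mono zero_le_power of_nat_0_le_iff)
    qed
    have "real (Suc u) ^ Suc u = (real u + 1) * (real u + 1) ^ u" by (simp add: add.commute)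
    also have "\<dots> \<le> (real u + 1) * (exp 1 * real u ^ u)"
      using key by (intro mult_left_mono) auto
    also have "\<dots> \<le> (real u + 1) * (exp 1 * (exp 1 ^ u * fact u))"
      using Suc.IH by (intro mult_left_mono) auto
    also have "\<dots> = exp 1 ^ Suc u * fact (Suc u)" by (simp add: algebra_simps)
    finally show ?thesis .
  qed
qed

lemma choose_le_ne:
  assumes "1 \<le> u" "u \<le> n"
  shows "real (n choose u) \<le> (exp 1 * real n / real u) ^ u"
proof -
  have f: "fact u > (0::real)" by simp
  have "real (n choose u) * real u ^ u \<le> real (n choose u) * (exp 1 ^ u * fact u)"
    using pow_fact_le_exp by (intro mult_left_mono) auto
  also have "\<dots> = exp 1 ^ u * (real (n choose u) * fact u)" by simp
  also have "\<dots> \<le> exp 1 ^ u * real n ^ u"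
    using choose_le_fact[OF assms(2)] by (intro mult_left_mono) auto
  finally have "real (n choose u) * real u ^ u \<le> exp 1 ^ u * real n ^ u" .
  moreover have "real u ^ u > 0" using assms by simp
  ultimately show ?thesis by (simp add: power_divide power_mult_distrib field_simps)
qed



definition cc :: "nat \<Rightarrow> nat \<Rightarrow> nat \<Rightarrow> real" where
  "cc n s x = 1 - (real (s choose x) + real ((n - s) choose x)) / real (n choose x)"

lemma sum_by_card:
  fixes h :: "nat \<Rightarrow> real"
  assumes "finite U"
  shows "(\<Sum>A\<in>{A. A \<subseteq> U \<and> P A}. h (card A)) =
         (\<Sum>x\<in>{0..card U}. real (card {A. A \<subseteq> U \<and> P A \<and> card A = x}) * h x)"
proof -
  let ?S = "{A. A \<subseteq> U \<and> P A}"
  have fS: "finite ?S" by (rule finite_subset[of _ "Pow U"]) (use assms in auto)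
  have img: "card ` ?S \<subseteq> {0..card U}" using assms by (auto intro: card_mono)
  have "(\<Sum>A\<in>?S. h (card A)) = (\<Sum>x\<in>{0..card U}. \<Sum>A\<in>{A \<in> ?S. card A = x}. h (card A))"
    using sum.group[OF fS _ img, of "\<lambda>A. h (card A)"] by simp
  also have "\<dots> = (\<Sum>x\<in>{0..card U}. real (card {A. A \<subseteq> U \<and> P A \<and> card A = x}) * h x)"
  proof (rule sum.cong[OF refl])
    fix x assume "x \<in> {0..card U}"
    have "(\<Sum>A\<in>{A \<in> ?S. card A = x}. h (card A)) = (\<Sum>A\<in>{A \<in> ?S. card A = x}. h x)"
      by (rule sum.cong) auto
    also have "\<dots> = real (card {A \<in> ?S. card A = x}) * h x" by simp
    also have eq: "{A \<in> ?S. card A = x} = {A. A \<subseteq> U \<and> P A \<and> card A = x}" by auto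
    finally show "(\<Sum>A\<in>{A \<in> ?S. card A = x}. h (card A)) = real (card {A. A \<subseteq> U \<and> P A \<and> card A = x}) * h x"
      by (simp only: eq)
  qed
  finally show ?thesis .
qed

lemma nsub: "finite U \<Longrightarrow> card {A. A \<subseteq> U \<and> card A = x} = card U choose x"
  using n_subsets by blast

lemma dist_sum1:
  assumes "finite U" "(\<Sum>x\<in>{0..card U}. g x) = 1"
  shows "(\<Sum>A\<in>{A. A \<subseteq> U}. g (card A) / real (card U choose card A)) = 1"
proof -
  have "(\<Sum>A\<in>{A. A \<subseteq> U \<and> True}. g (card A) / real (card U choose card A)) =
        (\<Sum>x\<in>{0..card U}. real (card {A. A \<subseteq> U \<and> True \<and> card A = x}) * (g x / real (card U choose x)))"
    by (rule sum_by_card[OF assms(1)])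
  also have "\<dots> = (\<Sum>x\<in>{0..card U}. g x)"
  proof (rule sum.cong[OF refl])
    fix x assume x: "x \<in> {0..card U}"
    have "card {A. A \<subseteq> U \<and> True \<and> card A = x} = card U choose x" using nsub[OF assms(1)] by simp
    moreover have "card U choose x > 0" using x by simp
    ultimately show "real (card {A. A \<subseteq> U \<and> True \<and> card A = x}) * (g x / real (card U choose x)) = g x"
      by simp
  qed
  finally show ?thesis using assms by simp
qed

lemma nc_bound:
  assumes U: "U = {1..n}" and S: "S \<subseteq> U" and g0: "\<And>x. 0 \<le> g x" and g1: "(\<Sum>x\<in>{0..n}. g x) = 1"
  shows "(\<Sum>A\<in>{A. A \<subseteq> U \<and> (A \<inter> S = {} \<or> A \<inter> (U - S) = {})}. g (card A) / real (n choose card A))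
           \<le> 1 - (\<Sum>x\<in>{2..n}. g x * cc n (card S) x)"
proof -
  let ?P = "\<lambda>A. A \<inter> S = {} \<or> A \<inter> (U - S) = {}"
  have fU: "finite U" and cU: "card U = n" using U by auto
  have fS: "finite S" using S fU finite_subset by blast
  have cD: "card (U - S) = n - card S" using S fS cU by (simp add: card_Diff_subset)
  have "(\<Sum>A\<in>{A. A \<subseteq> U \<and> ?P A}. g (card A) / real (n choose card A)) =
        (\<Sum>x\<in>{0..card U}. real (card {A. A \<subseteq> U \<and> ?P A \<and> card A = x}) * (g x / real (n choose x)))"
    by (rule sum_by_card[OF fU])
  also have "\<dots> \<le> (\<Sum>x\<in>{0..n}. g x - (if x \<in> {2..n} then g x * cc n (card S) x else 0))"
    unfolding cU
  proof (rule sum_mono)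
    fix x assume x: "x \<in> {0..n}"
    let ?N = "{A. A \<subseteq> U \<and> ?P A \<and> card A = x}"
    have pos: "real (n choose x) > 0" using x by simp
    have c1: "card ?N \<le> n choose x"
    proof -
      have "card ?N \<le> card {A. A \<subseteq> U \<and> card A = x}"
        by (rule card_mono) (use fU in auto)
      then show ?thesis using nsub[OF fU] cU by simp
    qed
    show "real (card ?N) * (g x / real (n choose x)) \<le> g x - (if x \<in> {2..n} then g x * cc n (card S) x else 0)"
    proof (cases "x \<in> {2..n}")
      case False
      have "real (card ?N) * (g x / real (n choose x)) \<le> real (n choose x) * (g x / real (n choose x))"
        using c1 g0[of x] pos by (intro mult_right_mono) auto
      then show ?thesis using False pos by simp
    next
      case True
      have sub: "?N \<subseteq> {A. A \<subseteq> S \<and> card A = x} \<union> {A. A \<subseteq> U - S \<and> card A = x}" by auto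
      have "card ?N \<le> card ({A. A \<subseteq> S \<and> card A = x} \<union> {A. A \<subseteq> U - S \<and> card A = x})"
        by (rule card_mono[OF _ sub]) (use fU fS in auto)
      also have "\<dots> \<le> card {A. A \<subseteq> S \<and> card A = x} + card {A. A \<subseteq> U - S \<and> card A = x}"
        by (rule card_Un_le)
      also have "\<dots> = (card S choose x) + ((n - card S) choose x)"
        using nsub[OF fS] nsub[of "U - S"] fU cD by simp
      finally have c2: "real (card ?N) \<le> real (card S choose x) + real ((n - card S) choose x)"
        by (simp only: of_nat_add[symmetric] of_nat_le_iff)
      have "real (card ?N) * (g x / real (n choose x)) \<le> (real (card S choose x) + real ((n - card S) choose x)) * (g x / real (n choose x))"
        using c2 g0[of x] pos by (intro mult_right_mono) auto
      also have "\<dots> = g x - g x * cc n (card S) x"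
        unfolding cc_def using pos by (simp add: field_simps)
      finally show ?thesis using True by simp
    qed
  qed
  also have "\<dots> = (\<Sum>x\<in>{0..n}. g x) - (\<Sum>x\<in>{0..n}. if x \<in> {2..n} then g x * cc n (card S) x else 0)"
    by (rule sum_subtractf)
  also have "(\<Sum>x\<in>{0..n}. if x \<in> {2..n} then g x * cc n (card S) x else 0) = (\<Sum>x\<in>{2..n}. g x * cc n (card S) x)"
    using sum.inter_restrict[of "{0..n}" "\<lambda>x. g x * cc n (card S) x" "{2..n}"] by (simp add: Int_absorb1)
  finally show ?thesis using g1 by simp
qed



lemma prob_bound:
  assumes n: "n \<ge> 1" and dist: "is_dist_family n M g"
  shows "1 - prob_connected n M g \<le>
           (\<Sum>s\<in>{1..n-1}. real (n choose s) * exp (- (\<Sum>k\<in>{1..M}. \<Sum>x\<in>{2..n}. g k x * cc n s x)))"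
    and "prob_connected n M g \<le> 1"
proof -
  define U where "U = {1..n}"
  define I where "I = {1..M}"
  define ep where "ep k A = g k (card A) / real (n choose card A)" for k and A :: "nat set"
  define w where "w V = (\<Prod>k\<in>I. ep k (V k))" for V :: "nat \<Rightarrow> nat set"
  define \<Omega> where "\<Omega> = PiE I (\<lambda>_. Pow U)"
  have fU: "finite U" and cU: "card U = n" unfolding U_def by auto
  have fI: "finite I" unfolding I_def by auto
  have fO: "finite \<Omega>" unfolding \<Omega>_def using fI fU by (intro finite_PiE) auto
  have g0: "\<And>k x. k \<in> I \<Longrightarrow> 0 \<le> g k x" and g1: "\<And>k. k \<in> I \<Longrightarrow> (\<Sum>x\<in>{0..n}. g k x) = 1"
    using dist unfolding is_dist_family_def I_def by auto
  have ep0: "\<And>k A. k \<in> I \<Longrightarrow> 0 \<le> ep k A" unfolding ep_def using g0 by auto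
  have w0: "\<And>V. 0 \<le> w V" unfolding w_def using ep0 by (intro prod_nonneg) auto
  have s1: "\<And>k. k \<in> I \<Longrightarrow> (\<Sum>A\<in>Pow U. ep k A) = 1"
  proof -
    fix k assume k: "k \<in> I"
    have "(\<Sum>A\<in>{A. A \<subseteq> U}. g k (card A) / real (card U choose card A)) = 1"
      by (rule dist_sum1[OF fU]) (use g1[OF k] cU in simp)
    then show "(\<Sum>A\<in>Pow U. ep k A) = 1" unfolding ep_def Pow_def cU .
  qed
  have total: "(\<Sum>V\<in>\<Omega>. w V) = 1"
  proof -
    have "(\<Prod>k\<in>I. \<Sum>A\<in>Pow U. ep k A) = (\<Sum>V\<in>\<Omega>. w V)"
      unfolding \<Omega>_def w_def by (rule prod_sum_PiE) (use fI fU in auto)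
    moreover have "(\<Prod>k\<in>I. \<Sum>A\<in>Pow U. ep k A) = 1" using s1 by simp
    ultimately show ?thesis by simp
  qed
  have P_def': "prob_connected n M g = (\<Sum>V\<in>\<Omega>. if hg_connected n M V then w V else 0)"
    unfolding prob_connected_def \<Omega>_def U_def I_def w_def ep_def edge_prob_def ..
  show "prob_connected n M g \<le> 1"
  proof -
    have "(\<Sum>V\<in>\<Omega>. if hg_connected n M V then w V else 0) \<le> (\<Sum>V\<in>\<Omega>. w V)"
      by (rule sum_mono) (use w0 in auto)
    then show ?thesis using total P_def' by simp
  qed
  define SS where "SS = {S. S \<subseteq> U \<and> S \<noteq> {} \<and> S \<noteq> U}"
  define NC where "NC S = {A. A \<subseteq> U \<and> (A \<inter> S = {} \<or> A \<inter> (U - S) = {})}" for S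
  have fSS: "finite SS" unfolding SS_def by (rule finite_subset[of _ "Pow U"]) (use fU in auto)
  have "1 - prob_connected n M g = (\<Sum>V\<in>\<Omega>. w V - (if hg_connected n M V then w V else 0))"
    using total P_def' by (simp add: sum_subtractf)
  also have "\<dots> \<le> (\<Sum>V\<in>\<Omega>. \<Sum>S\<in>SS. if V \<in> PiE I (\<lambda>_. NC S) then w V else 0)"
  proof (rule sum_mono)
    fix V assume V: "V \<in> \<Omega>"
    have nn: "0 \<le> (\<Sum>S\<in>SS. if V \<in> PiE I (\<lambda>_. NC S) then w V else 0)"
      by (rule sum_nonneg) (use w0 in auto)
    show "w V - (if hg_connected n M V then w V else 0) \<le> (\<Sum>S\<in>SS. if V \<in> PiE I (\<lambda>_. NC S) then w V else 0)"
    proof (cases "hg_connected n M V")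
      case True then show ?thesis using nn by simp
    next
      case False
      have "\<not> (\<forall>A B. A \<noteq> {} \<and> B \<noteq> {} \<and> A \<inter> B = {} \<and> A \<union> B = {1..n} \<longrightarrow>
        (\<exists>k\<in>{1..M}. V k \<inter> A \<noteq> {} \<and> V k \<inter> B \<noteq> {}))"
        using False unfolding hg_connected_def .
      then obtain A B where AB0: "A \<noteq> {} \<and> B \<noteq> {} \<and> A \<inter> B = {} \<and> A \<union> B = {1..n}"
        and nc0: "\<not> (\<exists>k\<in>{1..M}. V k \<inter> A \<noteq> {} \<and> V k \<inter> B \<noteq> {})"
        by blast
      have AB: "A \<noteq> {}" "B \<noteq> {}" "A \<inter> B = {}" "A \<union> B = U" using AB0 unfolding U_def by auto
      have nc: "\<forall>k\<in>I. \<not> (V k \<inter> A \<noteq> {} \<and> V k \<inter> B \<noteq> {})" using nc0 unfolding I_def by blast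
      have B: "B = U - A" using AB by blast
      have ASS: "A \<in> SS" unfolding SS_def using AB by blast
      have VNC: "V \<in> PiE I (\<lambda>_. NC A)"
        using V nc unfolding \<Omega>_def NC_def B PiE_iff by auto
      have "w V = (if V \<in> PiE I (\<lambda>_. NC A) then w V else 0)" using VNC by simp
      also have "\<dots> \<le> (\<Sum>S\<in>SS. if V \<in> PiE I (\<lambda>_. NC S) then w V else 0)"
        by (rule member_le_sum[OF ASS]) (use w0 fSS in auto)
      finally show ?thesis using False by simp
    qed
  qed
  also have "\<dots> = (\<Sum>S\<in>SS. \<Sum>V\<in>\<Omega>. if V \<in> PiE I (\<lambda>_. NC S) then w V else 0)"
    by (rule sum.swap)
  also have "\<dots> = (\<Sum>S\<in>SS. \<Sum>V\<in>PiE I (\<lambda>_. NC S). w V)"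
  proof (rule sum.cong[OF refl])
    fix S assume "S \<in> SS"
    have sub: "PiE I (\<lambda>_. NC S) \<subseteq> \<Omega>" unfolding \<Omega>_def NC_def by (intro PiE_mono) auto
    have "(\<Sum>V\<in>\<Omega>. if V \<in> PiE I (\<lambda>_. NC S) then w V else 0) = (\<Sum>V\<in>\<Omega> \<inter> PiE I (\<lambda>_. NC S). w V)"
      by (rule sum.inter_restrict[OF fO, symmetric])
    also have "\<Omega> \<inter> PiE I (\<lambda>_. NC S) = PiE I (\<lambda>_. NC S)" using sub by blast
    finally show "(\<Sum>V\<in>\<Omega>. if V \<in> PiE I (\<lambda>_. NC S) then w V else 0) = (\<Sum>V\<in>PiE I (\<lambda>_. NC S). w V)" .
  qed
  also have "\<dots> = (\<Sum>S\<in>SS. \<Prod>k\<in>I. \<Sum>A\<in>NC S. ep k A)"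
  proof (rule sum.cong[OF refl])
    fix S assume "S \<in> SS"
    have fNC: "finite (NC S)" unfolding NC_def by (rule finite_subset[of _ "Pow U"]) (use fU in auto)
    show "(\<Sum>V\<in>PiE I (\<lambda>_. NC S). w V) = (\<Prod>k\<in>I. \<Sum>A\<in>NC S. ep k A)"
      unfolding w_def by (rule prod_sum_PiE[symmetric]) (use fI fNC in auto)
  qed
  also have "\<dots> \<le> (\<Sum>S\<in>SS. exp (- (\<Sum>k\<in>I. \<Sum>x\<in>{2..n}. g k x * cc n (card S) x)))"
  proof (rule sum_mono)
    fix S assume S: "S \<in> SS"
    have "(\<Prod>k\<in>I. \<Sum>A\<in>NC S. ep k A) \<le> (\<Prod>k\<in>I. exp (- (\<Sum>x\<in>{2..n}. g k x * cc n (card S) x)))"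
    proof (rule prod_mono)
      fix k assume k: "k \<in> I"
      have "(\<Sum>A\<in>NC S. ep k A) \<le> 1 - (\<Sum>x\<in>{2..n}. g k x * cc n (card S) x)"
        unfolding NC_def ep_def
        by (rule nc_bound[OF U_def]) (use S g0[OF k] g1[OF k] in \<open>auto simp: SS_def\<close>)
      also have "\<dots> \<le> exp (- (\<Sum>x\<in>{2..n}. g k x * cc n (card S) x))"
        using exp_ge_add_one_self[of "- (\<Sum>x\<in>{2..n}. g k x * cc n (card S) x)"] by simp
      finally show "0 \<le> (\<Sum>A\<in>NC S. ep k A) \<and> (\<Sum>A\<in>NC S. ep k A) \<le> exp (- (\<Sum>x\<in>{2..n}. g k x * cc n (card S) x))"
        using ep0[OF k] by (auto intro: sum_nonneg)
    qed
    also have "\<dots> = exp (- (\<Sum>k\<in>I. \<Sum>x\<in>{2..n}. g k x * cc n (card S) x))"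
      by (simp add: exp_sum[OF fI, symmetric] sum_negf)
    finally show "(\<Prod>k\<in>I. \<Sum>A\<in>NC S. ep k A) \<le> exp (- (\<Sum>k\<in>I. \<Sum>x\<in>{2..n}. g k x * cc n (card S) x))" .
  qed
  also have "\<dots> \<le> (\<Sum>s\<in>{1..n-1}. real (n choose s) * exp (- (\<Sum>k\<in>I. \<Sum>x\<in>{2..n}. g k x * cc n s x)))"
  proof -
    define \<Phi> where "\<Phi> s = exp (- (\<Sum>k\<in>I. \<Sum>x\<in>{2..n}. g k x * cc n s x))" for s
    have "(\<Sum>S\<in>{S. S \<subseteq> U \<and> (S \<noteq> {} \<and> S \<noteq> U)}. \<Phi> (card S)) =
          (\<Sum>x\<in>{0..card U}. real (card {S. S \<subseteq> U \<and> (S \<noteq> {} \<and> S \<noteq> U) \<and> card S = x}) * \<Phi> x)"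
      by (rule sum_by_card[OF fU])
    also have "\<dots> \<le> (\<Sum>x\<in>{0..n}. if x \<in> {1..n-1} then real (n choose x) * \<Phi> x else 0)"
      unfolding cU
    proof (rule sum_mono)
      fix x assume x: "x \<in> {0..n}"
      let ?N = "{S. S \<subseteq> U \<and> (S \<noteq> {} \<and> S \<noteq> U) \<and> card S = x}"
      have Phi0: "0 \<le> \<Phi> x" unfolding \<Phi>_def by simp
      show "real (card ?N) * \<Phi> x \<le> (if x \<in> {1..n-1} then real (n choose x) * \<Phi> x else 0)"
      proof (cases "x \<in> {1..n-1}")
        case True
        have "card ?N \<le> card {S. S \<subseteq> U \<and> card S = x}" by (rule card_mono) (use fU in auto)
        then have "card ?N \<le> n choose x" using nsub[OF fU] cU by simp
        then have "real (card ?N) * \<Phi> x \<le> real (n choose x) * \<Phi> x"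
          using Phi0 by (intro mult_right_mono) auto
        then show ?thesis using True by simp
      next
        case False
        then have "x = 0 \<or> x = n" using x by auto
        have "?N = {}"
        proof (rule ccontr)
          assume "?N \<noteq> {}"
          then obtain S where S: "S \<subseteq> U" "S \<noteq> {}" "S \<noteq> U" "card S = x" by blast
          have fS: "finite S" using S fU finite_subset by blast
          show False
          proof (cases "x = 0")
            case True then show False using S fS by simp
          next
            case False
            then have "card S = card U" using \<open>x = 0 \<or> x = n\<close> S cU by simp
            then show False using S fU card_subset_eq by blast
          qed
        qed
        then have c0: "card ?N = 0" by (simp only: card.empty)
        show ?thesis unfolding c0 using False by auto
      qed
    qed
    also have "\<dots> = (\<Sum>x\<in>{1..n-1}. real (n choose x) * \<Phi> x)"
      using sum.inter_restrict[of "{0..n}" "\<lambda>x. real (n choose x) * \<Phi> x" "{1..n-1}"]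
      by (simp add: Int_absorb1 subset_iff)
    finally show ?thesis unfolding \<Phi>_def SS_def by simp
  qed
  finally show "1 - prob_connected n M g \<le>
           (\<Sum>s\<in>{1..n-1}. real (n choose s) * exp (- (\<Sum>k\<in>{1..M}. \<Sum>x\<in>{2..n}. g k x * cc n s x)))"
    unfolding I_def .
qed



lemma cc_lower:
  assumes "1 \<le> n" "s \<le> n" "x \<le> n"
  shows "1 - (real s / real n) ^ x - (real (n - s) / real n) ^ x \<le> cc n s x"
proof -
  have pos: "real (n choose x) > 0" using assms by simp
  have a: "real (s choose x) \<le> (real s / real n) ^ x * real (n choose x)"
    using choose_ratio_le[of s n x] assms by simp
  have b: "real ((n-s) choose x) \<le> (real (n-s) / real n) ^ x * real (n choose x)"
    using choose_ratio_le[of "n-s" n x] assms by simp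
  have "(real (s choose x) + real ((n - s) choose x)) / real (n choose x)
        \<le> ((real s / real n) ^ x * real (n choose x) + (real (n-s) / real n) ^ x * real (n choose x)) / real (n choose x)"
    using a b pos by (intro divide_right_mono) auto
  also have "\<dots> = (real s / real n) ^ x + (real (n-s) / real n) ^ x"
    using pos by (simp add: field_simps)
  finally show ?thesis unfolding cc_def by simp
qed

lemma cc_lower_u:
  assumes "1 \<le> n" "s \<le> n" "x \<le> n"
  shows "1 - (real (min s (n-s)) / real n) ^ x - (1 - real (min s (n-s)) / real n) ^ x \<le> cc n s x"
proof -
  have n0: "real n > 0" using assms by simp
  have e1: "1 - real s / real n = real (n - s) / real n" using assms n0 by (simp add: of_nat_diff field_simps)
  have e2: "1 - real (n - s) / real n = real s / real n" using assms n0 by (simp add: of_nat_diff field_simps)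
  show ?thesis
  proof (cases "s \<le> n - s")
    case True
    then show ?thesis using cc_lower[OF assms] e1 by simp
  next
    case False
    then show ?thesis using cc_lower[OF assms] e2 by simp
  qed
qed

lemma geom_le:
  fixes r :: real
  assumes "0 \<le> r" "r \<le> 1/2"
  shows "(\<Sum>s\<in>{1..N}. r ^ s) \<le> 2 * r - 2 * r ^ Suc N"
proof (induction N)
  case 0 then show ?case by simp
next
  case (Suc N)
  have "r ^ Suc (Suc N) * 2 \<le> r ^ Suc N"
  proof -
    have "r ^ Suc (Suc N) * 2 = r ^ Suc N * (2 * r)" by simp
    also have "\<dots> \<le> r ^ Suc N * 1" using assms by (intro mult_left_mono) auto
    finally show ?thesis by simp
  qed
  then show ?case using Suc by (simp add: sum.cl_ivl_Suc)
qed

lemma geom_le2: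
  fixes r :: real
  assumes "0 \<le> r" "r \<le> 1/2"
  shows "(\<Sum>s\<in>{1..N}. r ^ s) \<le> 2 * r"
  using geom_le[OF assms, of N] assms zero_le_power[of r "Suc N"] by linarith

lemma geom_rev:
  fixes r :: real
  assumes "1 \<le> n"
  shows "(\<Sum>s\<in>{1..n-1}. r ^ (n - s)) = (\<Sum>s\<in>{1..n-1}. r ^ s)"
proof -
  have "(\<Sum>s\<in>{1..n-1}. r ^ s) = (\<Sum>s\<in>{1..n-1}. r ^ (n - 1 + 1 - s))"
    by (rule sum.atLeastAtMost_rev)
  also have "\<dots> = (\<Sum>s\<in>{1..n-1}. r ^ (n - s))" using assms by simp
  finally show ?thesis by simp
qed

lemma term_bound:
  fixes g :: "nat \<Rightarrow> nat \<Rightarrow> real"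
  assumes n: "2 \<le> n" and s: "1 \<le> s" "s \<le> n - 1"
    and g0: "\<And>k x. k \<in> {1..M} \<Longrightarrow> 0 \<le> g k x"
    and K: "K > 0" and L: "L > 0"
    and S0: "S0 = (\<Sum>k\<in>{1..M}. \<Sum>x\<in>{2..n}. g k x)"
    and S1: "S1 = (\<Sum>k\<in>{1..M}. \<Sum>x\<in>{2..n}. real x * g k x)"
    and S2: "S2 = (\<Sum>k\<in>{1..M}. \<Sum>x\<in>{2..n}. (real x)^2 * g k x)"
    and hK: "S2 \<le> K * S0" and hL: "S1 = real n * L"
  shows "real (n choose s) * exp (- (\<Sum>k\<in>{1..M}. \<Sum>x\<in>{2..n}. g k x * cc n s x))
          \<le> (real n * exp (1/2 - L)) ^ (min s (n-s)) + (exp 1 * K * L * exp (- (2 * L / K))) ^ (min s (n-s))"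
proof -
  define u where "u = min s (n - s)"
  define t where "t = real u / real n"
  define A where "A = (\<Sum>k\<in>{1..M}. \<Sum>x\<in>{2..n}. g k x * cc n s x)"
  have n0: "real n > 0" using n by simp
  have u1: "1 \<le> u" and u2: "2 * u \<le> n" and un: "u \<le> n" using s n unfolding u_def by auto
  have t0: "0 \<le> t" and t1: "t \<le> 1/2" and t1': "t \<le> 1"
    using u2 n0 unfolding t_def by (auto simp: field_simps)
  have cl: "\<And>x. x \<in> {2..n} \<Longrightarrow> 1 - t ^ x - (1 - t) ^ x \<le> cc n s x"
    unfolding t_def u_def using cc_lower_u[of n s] n s by auto
  have Ab: "t * S1 - t^2 * S2 \<le> A"
  proof -
    have "t * S1 - t^2 * S2 = (\<Sum>k\<in>{1..M}. \<Sum>x\<in>{2..n}. g k x * (real x * t - (real x)^2 * t^2))"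
      unfolding S1 S2 by (simp add: sum_distrib_left sum_subtractf[symmetric] algebra_simps)
    also have "\<dots> \<le> A" unfolding A_def
    proof (intro sum_mono)
      fix k x assume k: "k \<in> {1..M}" and x: "x \<in> {2..n}"
      have "real x * t - (real x)^2 * t^2 \<le> cc n s x"
        using poly_b[OF t0 t1', of x] cl[OF x] x by auto
      then show "g k x * (real x * t - (real x)^2 * t^2) \<le> g k x * cc n s x"
        using g0[OF k] by (intro mult_left_mono) auto
    qed
    finally show ?thesis .
  qed
  have Aa: "t * S0 \<le> A"
  proof -
    have "t * S0 = (\<Sum>k\<in>{1..M}. \<Sum>x\<in>{2..n}. g k x * t)"
      unfolding S0 by (simp add: sum_distrib_left algebra_simps)
    also have "\<dots> \<le> A" unfolding A_def
    proof (intro sum_mono)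
      fix k x assume k: "k \<in> {1..M}" and x: "x \<in> {2..n}"
      have "t \<le> cc n s x" using poly_a[OF t0 t1, of x] cl[OF x] x by auto
      then show "g k x * t \<le> g k x * cc n s x"
        using g0[OF k] by (intro mult_left_mono) auto
    qed
    finally show ?thesis .
  qed
  have S01: "2 * S0 \<le> S1" unfolding S0 S1 sum_distrib_left
    by (intro sum_mono) (use g0 in \<open>auto intro!: mult_right_mono\<close>)
  have S12: "2 * S1 \<le> S2"
  proof -
    have "2 * S1 = (\<Sum>k\<in>{1..M}. \<Sum>x\<in>{2..n}. (2 * real x) * g k x)"
      unfolding S1 by (simp add: sum_distrib_left algebra_simps)
    also have "\<dots> \<le> S2" unfolding S2
    proof (intro sum_mono)
      fix k x assume k: "k \<in> {1..M}" and x: "x \<in> {2..n}"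
      have "2 * real x \<le> (real x)^2" using x by (simp add: power2_eq_square mult_right_mono)
      then show "(2 * real x) * g k x \<le> (real x)^2 * g k x" using g0[OF k] by (intro mult_right_mono) auto
    qed
    finally show ?thesis .
  qed
  have tS1: "t * S1 = real u * L" unfolding t_def hL using n0 by simp
  have Aa': "2 * real u * L / K \<le> A"
  proof -
    have "S1 \<le> K * S0 / 2" using S12 hK by simp
    then have "2 * S1 / K \<le> S0" using K by (simp add: field_simps)
    then have "t * (2 * S1 / K) \<le> t * S0" using t0 by (intro mult_left_mono) auto
    moreover have "t * (2 * S1 / K) = 2 * real u * L / K"
      using tS1 by (metis times_divide_eq_right mult.left_commute mult.assoc)
    ultimately show ?thesis using Aa by linarith
  qed
  have Ab': "real u * L - (real u)^2 * K * L / (2 * real n) \<le> A"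
  proof -
    have "K * (2 * S0) \<le> K * S1" by (rule mult_left_mono[OF S01]) (use K in simp)
    then have "S2 \<le> K * S1 / 2" using hK by linarith
    then have "t^2 * S2 \<le> t^2 * (K * S1 / 2)" by (intro mult_left_mono) auto
    moreover have "t^2 * (K * S1 / 2) = (real u)^2 * K * L / (2 * real n)"
      unfolding t_def hL using n0 by (simp add: field_simps power2_eq_square)
    ultimately show ?thesis using Ab tS1 by linarith
  qed
  have binom: "n choose s = n choose u"
    unfolding u_def using binomial_symmetric[of s n] s by (cases "s \<le> n - s") auto
  have main: "real (n choose u) * exp (- A)
        \<le> (real n * exp (1/2 - L)) ^ u + (exp 1 * K * L * exp (- (2 * L / K))) ^ u"
  proof (cases "real u * K * L \<le> real n")
    case True
    have "(real u)^2 * K * L / (2 * real n) = real u * (real u * K * L) / (2 * real n)"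
      by (simp add: power2_eq_square)
    also have "\<dots> \<le> real u * real n / (2 * real n)"
      using True by (intro divide_right_mono mult_left_mono) auto
    also have "\<dots> = real u / 2" using n0 by simp
    finally have "real u * L - real u / 2 \<le> A" using Ab' by linarith
    then have e: "exp (- A) \<le> exp (real u * (1/2 - L))" by (simp add: algebra_simps)
    have c: "real (n choose u) \<le> real n ^ u" using binomial_le_pow[OF un] by (metis of_nat_le_iff of_nat_power)
    have "real (n choose u) * exp (- A) \<le> real n ^ u * exp (real u * (1/2 - L))"
      using c e by (intro mult_mono) auto
    also have "\<dots> = (real n * exp (1/2 - L)) ^ u" by (simp add: exp_of_nat_mult power_mult_distrib)
    moreover have "0 \<le> (exp 1 * K * L * exp (- (2 * L / K))) ^ u" using K L by simp
    ultimately show ?thesis by linarith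
  next
    case False
    have u0: "real u > 0" using u1 by simp
    have "real n / real u \<le> K * L" using False u0 by (simp add: field_simps)
    then have "exp 1 * (real n / real u) \<le> exp 1 * (K * L)" by (intro mult_left_mono) auto
    then have "exp 1 * real n / real u \<le> exp 1 * K * L" by (simp add: mult.assoc)
    then have c: "real (n choose u) \<le> (exp 1 * K * L) ^ u"
      using choose_le_ne[OF u1 un] by (smt (verit) divide_nonneg_nonneg exp_ge_zero mult_nonneg_nonneg of_nat_0_le_iff power_mono)
    have e: "exp (- A) \<le> exp (real u * (- (2 * L / K)))" using Aa' by (simp add: field_simps)
    have "real (n choose u) * exp (- A) \<le> (exp 1 * K * L) ^ u * exp (real u * (- (2 * L / K)))"
      using c e by (intro mult_mono) auto
    also have "\<dots> = (exp 1 * K * L * exp (- (2 * L / K))) ^ u" by (simp only: exp_of_nat_mult power_mult_distrib)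
    moreover have "0 \<le> (real n * exp (1/2 - L)) ^ u" by simp
    ultimately show ?thesis by linarith
  qed
  then show ?thesis unfolding binom A_def u_def .
qed



lemma finite_bound:
  fixes g :: "nat \<Rightarrow> nat \<Rightarrow> real"
  assumes n: "2 \<le> n" and dist: "is_dist_family n M g"
    and K: "K > 0" and L: "L > 0"
    and S0: "S0 = (\<Sum>k\<in>{1..M}. \<Sum>x\<in>{2..n}. g k x)"
    and S1: "S1 = (\<Sum>k\<in>{1..M}. \<Sum>x\<in>{2..n}. real x * g k x)"
    and S2: "S2 = (\<Sum>k\<in>{1..M}. \<Sum>x\<in>{2..n}. (real x)^2 * g k x)"
    and hK: "S2 \<le> K * S0" and hL: "S1 = real n * L"
    and r1: "r1 = real n * exp (1/2 - L)" and r2: "r2 = exp 1 * K * L * exp (- (2 * L / K))"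
    and r1h: "r1 \<le> 1/2" and r2h: "r2 \<le> 1/2"
  shows "1 - prob_connected n M g \<le> 4 * r1 + 4 * r2"
proof -
  have g0: "\<And>k x. k \<in> {1..M} \<Longrightarrow> 0 \<le> g k x" using dist unfolding is_dist_family_def by auto
  have r10: "0 \<le> r1" unfolding r1 by simp
  have r20: "0 \<le> r2" unfolding r2 using K L by simp
  have mn: "\<And>r::real. 0 \<le> r \<Longrightarrow> r ^ min s (n - s) \<le> r ^ s + r ^ (n - s)" for s
    by (cases "s \<le> n - s") (auto simp: min_def)
  have "1 - prob_connected n M g \<le>
           (\<Sum>s\<in>{1..n-1}. real (n choose s) * exp (- (\<Sum>k\<in>{1..M}. \<Sum>x\<in>{2..n}. g k x * cc n s x)))"
    using prob_bound(1)[OF _ dist] n by simp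
  also have "\<dots> \<le> (\<Sum>s\<in>{1..n-1}. r1 ^ min s (n-s) + r2 ^ min s (n-s))"
    unfolding r1 r2
    by (intro sum_mono term_bound[OF n _ _ g0 K L S0 S1 S2 hK hL]) auto
  also have "\<dots> \<le> (\<Sum>s\<in>{1..n-1}. (r1 ^ s + r2 ^ s) + (r1 ^ (n-s) + r2 ^ (n - s)))"
  proof (intro sum_mono)
    fix s
    show "r1 ^ min s (n-s) + r2 ^ min s (n-s) \<le> (r1 ^ s + r2 ^ s) + (r1 ^ (n-s) + r2 ^ (n - s))"
      using mn[OF r10, of s] mn[OF r20, of s] by linarith
  qed
  also have "\<dots> = (\<Sum>s\<in>{1..n-1}. r1 ^ s) + (\<Sum>s\<in>{1..n-1}. r2 ^ s) + ((\<Sum>s\<in>{1..n-1}. r1 ^ (n-s)) + (\<Sum>s\<in>{1..n-1}. r2 ^ (n-s)))"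
    by (simp add: sum.distrib)
  also have "\<dots> = 2 * (\<Sum>s\<in>{1..n-1}. r1 ^ s) + 2 * (\<Sum>s\<in>{1..n-1}. r2 ^ s)"
    using geom_rev[of n r1] geom_rev[of n r2] n by simp
  also have "\<dots> \<le> 2 * (2 * r1) + 2 * (2 * r2)"
    using geom_le2[OF r10 r1h, of "n-1"] geom_le2[OF r20 r2h, of "n-1"] by linarith
  finally show ?thesis by simp
qed

theorem mainTheorem14:
  fixes m :: "nat \<Rightarrow> nat"
    and f :: "nat \<Rightarrow> nat \<Rightarrow> nat \<Rightarrow> real"
  assumes m_pos: "\<And>n. n \<ge> 1 \<Longrightarrow> m n \<ge> 1"
    and dist: "\<And>n. n \<ge> 1 \<Longrightarrow> is_dist_family n (m n) (f n)"
    and mom: "lesssim (\<lambda>n. moment 2 n (m n) (f n)) (\<lambda>n. moment 0 n (m n) (f n))"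
    and mu: "filterlim (\<lambda>n. ln (real n) - real (m n) / real n * moment 1 n (m n) (f n))
               at_bot sequentially"
  shows "(\<lambda>n. prob_connected n (m n) (f n)) \<longlonglongrightarrow> 1"
proof -
  define \<mu> where "\<mu> n = ln (real n) - real (m n) / real n * moment 1 n (m n) (f n)" for n
  define q where "q n = moment 2 n (m n) (f n) / \<bar>moment 0 n (m n) (f n)\<bar>" for n
  have muZ: "\<And>Z. eventually (\<lambda>n. \<mu> n \<le> Z) sequentially"
    using mu unfolding filterlim_at_bot \<mu>_def by blast
  have lim: "limsup (\<lambda>n. ereal (q n)) < \<infinity>" using mom unfolding lesssim_def q_def .
  obtain B where B: "limsup (\<lambda>n. ereal (q n)) < ereal B"
  proof (cases "limsup (\<lambda>n. ereal (q n))")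
    case (real r) then show ?thesis using that[of "r + 1"] by simp
  next
    case PInf then show ?thesis using lim by simp
  next
    case MInf then show ?thesis using that[of 0] by simp
  qed
  have evB: "eventually (\<lambda>n. q n < B) sequentially"
    using Limsup_lessD[OF B] by simp
  define K where "K = max B 1"
  have K: "K > 0" unfolding K_def by simp
  define L where "L n = ln (real n) - \<mu> n" for n
  have Ltop: "filterlim L at_top sequentially"
    unfolding filterlim_at_top
  proof
    fix Z :: real
    show "eventually (\<lambda>n. Z \<le> L n) sequentially"
      using muZ[of "- Z"] eventually_ge_at_top[of "1::nat"]
    proof eventually_elim
      case (elim n)
      then have "0 \<le> ln (real n)" using ln_ge_zero[of "real n"] by simp
      then show ?case unfolding L_def using elim by linarith
    qed
  qed
  define r1 where "r1 n = exp (1/2 + \<mu> n)" for n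
  define r2 where "r2 n = exp 1 * K * L n * exp (- (2 * L n / K))" for n
  have r1lim: "r1 \<longlonglongrightarrow> 0"
  proof -
    have "filterlim (\<lambda>n. 1/2 + \<mu> n) at_bot sequentially"
      unfolding filterlim_at_bot
    proof
      fix Z :: real
      show "eventually (\<lambda>n. 1/2 + \<mu> n \<le> Z) sequentially"
        using muZ[of "Z - 1/2"] by eventually_elim auto
    qed
    from filterlim_compose[OF exp_at_bot this] show ?thesis unfolding r1_def by (simp add: o_def)
  qed
  have r2lim: "r2 \<longlonglongrightarrow> 0"
  proof -
    define y where "y n = 2 * L n / K" for n
    have ytop: "filterlim y at_top sequentially"
      unfolding filterlim_at_top
    proof
      fix Z :: real
      show "eventually (\<lambda>n. Z \<le> y n) sequentially"
        using Ltop[unfolded filterlim_at_top, rule_format, of "Z * K / 2"]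
        by eventually_elim (use K in \<open>auto simp: y_def field_simps\<close>)
    qed
    have "(\<lambda>n. y n ^ 1 / exp (y n)) \<longlonglongrightarrow> 0"
      using filterlim_compose[OF tendsto_power_div_exp_0[of 1] ytop] by (simp add: o_def)
    then have "(\<lambda>n. (exp 1 * K * K / 2) * (y n ^ 1 / exp (y n))) \<longlonglongrightarrow> 0"
      by (rule tendsto_mult_right_zero)
    moreover have "\<And>n. (exp 1 * K * K / 2) * (y n ^ 1 / exp (y n)) = r2 n"
      unfolding r2_def y_def using K by (simp add: exp_minus field_simps)
    ultimately show ?thesis by simp
  qed
  have ev1: "eventually (\<lambda>n. r1 n < 1/2) sequentially" using order_tendstoD(2)[OF r1lim, of "1/2"] by simp
  have ev2: "eventually (\<lambda>n. r2 n < 1/2) sequentially" using order_tendstoD(2)[OF r2lim, of "1/2"] by simp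
  have key: "eventually (\<lambda>n. 1 - (4 * r1 n + 4 * r2 n) \<le> prob_connected n (m n) (f n)
                              \<and> prob_connected n (m n) (f n) \<le> 1) sequentially"
    using ev1 ev2 evB muZ[of "-1"] eventually_ge_at_top[of "2::nat"]
  proof eventually_elim
    case (elim n)
    have n: "2 \<le> n" using elim by simp
    have n1: "1 \<le> n" using n by simp
    define M where "M = m n"
    define g where "g = f n"
    have M: "1 \<le> M" unfolding M_def using m_pos[OF n1] .
    have dn: "is_dist_family n M g" unfolding M_def g_def using dist[OF n1] .
    have g0: "\<And>k x. k \<in> {1..M} \<Longrightarrow> 0 \<le> g k x" using dn unfolding is_dist_family_def by auto
    define S0 where "S0 = (\<Sum>k\<in>{1..M}. \<Sum>x\<in>{2..n}. g k x)"
    define S1 where "S1 = (\<Sum>k\<in>{1..M}. \<Sum>x\<in>{2..n}. real x * g k x)"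
    define S2 where "S2 = (\<Sum>k\<in>{1..M}. \<Sum>x\<in>{2..n}. (real x)^2 * g k x)"
    have M0: "real M > 0" using M by simp
    have n0: "real n > 0" using n by simp
    have mom0: "moment 0 n (m n) (f n) = S0 / real M"
      unfolding moment_def S0_def M_def g_def by simp
    have mom1: "moment 1 n (m n) (f n) = S1 / real M"
      unfolding moment_def S1_def M_def g_def by simp
    have mom2: "moment 2 n (m n) (f n) = S2 / real M"
      unfolding moment_def S2_def M_def g_def by simp
    have muS: "\<mu> n = ln (real n) - S1 / real n"
      unfolding \<mu>_def mom1 using M0 by (simp add: M_def)
    have hL: "S1 = real n * L n" unfolding L_def muS using n0 by simp
    have "0 \<le> ln (real n)" using ln_ge_zero[of "real n"] n1 by simp
    then have Lpos: "L n > 0" unfolding L_def using elim by linarith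
    have S1pos: "S1 > 0" using hL Lpos n0 by simp
    have S10: "S1 \<le> real n * S0" unfolding S1_def S0_def sum_distrib_left
      by (intro sum_mono mult_right_mono) (use g0 in auto)
    have S0pos: "S0 > 0" using S10 S1pos n0
      by (metis mult_le_0_iff not_le order.trans less_imp_le)
    have hK: "S2 \<le> K * S0"
    proof -
      have "q n < B" using elim by simp
      then have "S2 / S0 < B" unfolding q_def mom0 mom2 using M0 S0pos by simp
      then have "S2 < B * S0" using S0pos by (simp add: field_simps)
      moreover have "B * S0 \<le> K * S0" unfolding K_def using S0pos by (intro mult_right_mono) auto
      ultimately show ?thesis by simp
    qed
    have r1e: "r1 n = real n * exp (1/2 - L n)"
      unfolding r1_def L_def using n0 by (simp add: exp_diff exp_add)
    have b: "1 - prob_connected n M g \<le> 4 * r1 n + 4 * r2 n"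
      by (rule finite_bound[OF n dn K Lpos S0_def S1_def S2_def hK hL r1e r2_def])
         (use elim in auto)
    have c: "prob_connected n M g \<le> 1" using prob_bound(2)[OF n1 dn] .
    show ?case using b c unfolding M_def g_def by simp
  qed
  have low: "(\<lambda>n. 1 - (4 * r1 n + 4 * r2 n)) \<longlonglongrightarrow> 1"
    using tendsto_diff[OF tendsto_const[of 1] tendsto_add[OF tendsto_mult_right_zero[OF r1lim, of 4] tendsto_mult_right_zero[OF r2lim, of 4]]]
    by simp
  show ?thesis
    by (rule tendsto_sandwich[OF _ _ low tendsto_const[of 1]]) (use key in \<open>auto elim: eventually_mono\<close>)
qed

end
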